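(* Let $K\ge 3$, $d\in\mathbb{N}$, $\eta>0$, and for each $k\in[K]=\{1,\dots,K\}$ let $n_k\in\mathbb{N}$ and points $x^k_1,\dots,x^k_{n_k}\in\mathbb{R}^d$ be given. Indices of marginals are taken cyclically: $K+1$ means $1$ and $0$ means $K$. For $\ell,t\in[K]$ define $\mathcal{K}^{(\ell,t)}\in\mathbb{R}^{n_\ell\times n_t}$ by $\mathcal{K}^{(\ell,t)}_{i,j}=\exp\!\big(-\tfrac1\eta\|x^\ell_i-x^t_j\|_2^2\big)$. Let $\mathcal{K}\in\mathbb{R}^{n_1\times\cdots\times n_K}$ be given by $\mathcal{K}_{i_1,\dots,i_K}=\exp\!\big(-\tfrac1\eta\sum_{k=1}^{K}\|x^k_{i_k}-x^{k+1}_{i_{k+1}}\|_2^2\big)=\prod_{k=1}^K\mathcal{K}^{(k,k+1)}_{i_k,i_{k+1}}$, let $\phi^k\in\mathbb{R}^{n_k}$, $k\in[K]$, be arbitrary vectors and $\Phi_{i_1,\dots,i_K}=\prod_{k=1}^K\phi^k_{i_k}$. For distinct $\ell,t\in[K]$ let $d(\ell,t)=t-\ell$ if $t\ge\ell$ and $d(\ell,t)=K-\ell+t$ otherwise, and define $\alpha^{(\ell,t)}\in\mathbb{R}^{n_\ell\times n_t}$ recursively by $\alpha^{(\ell,t)}=\mathcal{K}^{(\ell,t)}$ if $d(\ell,t)=1$ and $\alpha^{(\ell,t)}=\mathcal{K}^{(\ell,\ell+1)}\big(\phi^{\ell+1}\odot\alpha^{(\ell+1,t)}\big)$ otherwise.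 Define $\lambda^{(1,k)}\in\mathbb{R}^{n_1\times n_k}$ for $k=2,\dots,K$ by $\lambda^{(1,2)}=\mathcal{K}^{(1,2)}$ and $\lambda^{(1,k)}=\lambda^{(1,k-1)}\big(\phi^{k-1}\odot\mathcal{K}^{(k-1,k)}\big)$ for $k=3,\dots,K$. Then $$P_k(\mathcal{K}\odot\Phi)=\begin{cases}\phi^1\odot\big\langle\mathcal{K}^{(1,2)},\big(\phi^2\odot\alpha^{(2,1)}\big)^{\intercal}\big\rangle, & k=1,\\[2pt] \phi^k\odot\big\langle\alpha^{(k,1)},\big(\phi^1\odot\lambda^{(1,k)}\big)^{\intercal}\big\rangle, & k=2,\dots,K.\end{cases}$$
   Context: $P_k$ denotes the $k$-th marginal projection of a tensor $T\in\mathbb{R}^{n_1\times\cdots\times n_K}$: $[P_k(T)]_{i}=\sum T_{i_1,\dots,i_K}$, the sum over all $i_\ell\in[n_\ell]$, $\ell\neq k$, with $i_k=i$ fixed. $\odot$ between tensors of equal size (and between vectors) is the entrywise product; for a vector $v\in\mathbb{R}^n$ and a matrix $A\in\mathbb{R}^{n\times m}$, $v\odot A$ is the matrix with entries $v_iA_{ij}$. For matrices $G,H\in\mathbb{R}^{n\times m}$, $\langle G,H\rangle\in\mathbb{R}^n$ denotes the inner product along the second dimension: $\langle G,H\rangle_i=\sum_{j=1}^m G_{ij}H_{ij}$. *)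

theory Defs
  imports "HOL-Analysis.Analysis"
begin

text \<open>Matrices are functions nat => nat => real with 0-based entry indices
  (row i < rows, column j < cols); vectors are nat => real.
  Marginals are numbered 1..K.\<close>

type_synonym mat = "nat \<Rightarrow> nat \<Rightarrow> real"
type_synonym vec = "nat \<Rightarrow> real"

definition matmul :: "nat \<Rightarrow> mat \<Rightarrow> mat \<Rightarrow> mat" where
  "matmul m A B = (\<lambda>i j. \<Sum>r<m. A i r * B r j)"

definition vscale :: "vec \<Rightarrow> mat \<Rightarrow> mat" where
  "vscale v A = (\<lambda>i j. v i * A i j)"

definition mtransp :: "mat \<Rightarrow> mat" where
  "mtransp A = (\<lambda>i j. A j i)"

definition rowinner :: "nat \<Rightarrow> mat \<Rightarrow> mat \<Rightarrow> vec" where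
  "rowinner m G H = (\<lambda>i. \<Sum>j<m. G i j * H i j)"

definition csucc :: "nat \<Rightarrow> nat \<Rightarrow> nat" where
  "csucc K k = (if k = K then 1 else k + 1)"

definition cdist :: "nat \<Rightarrow> nat \<Rightarrow> nat \<Rightarrow> nat" where
  "cdist K l t = (if t \<ge> l then t - l else K - l + t)"

definition Kmat :: "real \<Rightarrow> (nat \<Rightarrow> nat \<Rightarrow> real ^ 'd) \<Rightarrow> nat \<Rightarrow> nat \<Rightarrow> mat" where
  "Kmat \<eta> x l t = (\<lambda>i j. exp (- (1 / \<eta>) * (norm (x l i - x t j))\<^sup>2))"

definition tidx :: "nat \<Rightarrow> (nat \<Rightarrow> nat) \<Rightarrow> (nat \<Rightarrow> nat) set" where
  "tidx K n = PiE {1..K} (\<lambda>k. {..<n k})"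

definition Ktens :: "nat \<Rightarrow> real \<Rightarrow> (nat \<Rightarrow> nat \<Rightarrow> real ^ 'd) \<Rightarrow> (nat \<Rightarrow> nat) \<Rightarrow> real" where
  "Ktens K \<eta> x = (\<lambda>i. exp (- (1 / \<eta>) *
      (\<Sum>k=1..K. (norm (x k (i k) - x (csucc K k) (i (csucc K k))))\<^sup>2)))"

definition Phi :: "nat \<Rightarrow> (nat \<Rightarrow> vec) \<Rightarrow> (nat \<Rightarrow> nat) \<Rightarrow> real" where
  "Phi K \<phi> = (\<lambda>i. \<Prod>k=1..K. \<phi> k (i k))"

definition marg :: "nat \<Rightarrow> (nat \<Rightarrow> nat) \<Rightarrow> nat \<Rightarrow> ((nat \<Rightarrow> nat) \<Rightarrow> real) \<Rightarrow> vec" where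
  "marg K n k T = (\<lambda>j. \<Sum>i\<in>{i \<in> tidx K n. i k = j}. T i)"

text \<open>alpha^(l,t) via the number m of remaining recursion steps (m = d(l,t) - 1)\<close>
fun alpha_rec :: "nat \<Rightarrow> (nat \<Rightarrow> nat) \<Rightarrow> real \<Rightarrow> (nat \<Rightarrow> nat \<Rightarrow> real ^ 'd) \<Rightarrow> (nat \<Rightarrow> vec)
      \<Rightarrow> nat \<Rightarrow> nat \<Rightarrow> nat \<Rightarrow> mat" where
  "alpha_rec K n \<eta> x \<phi> 0 l t = Kmat \<eta> x l t"
| "alpha_rec K n \<eta> x \<phi> (Suc m) l t =
     matmul (n (csucc K l)) (Kmat \<eta> x l (csucc K l))
       (vscale (\<phi> (csucc K l)) (alpha_rec K n \<eta> x \<phi> m (csucc K l) t))"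

definition alpha :: "nat \<Rightarrow> (nat \<Rightarrow> nat) \<Rightarrow> real \<Rightarrow> (nat \<Rightarrow> nat \<Rightarrow> real ^ 'd) \<Rightarrow> (nat \<Rightarrow> vec)
      \<Rightarrow> nat \<Rightarrow> nat \<Rightarrow> mat" where
  "alpha K n \<eta> x \<phi> l t = alpha_rec K n \<eta> x \<phi> (cdist K l t - 1) l t"

text \<open>lambda^(1,k), k = 2..K (values for k < 2 are irrelevant)\<close>
fun lam :: "(nat \<Rightarrow> nat) \<Rightarrow> real \<Rightarrow> (nat \<Rightarrow> nat \<Rightarrow> real ^ 'd) \<Rightarrow> (nat \<Rightarrow> vec) \<Rightarrow> nat \<Rightarrow> mat" where
  "lam n \<eta> x \<phi> (Suc (Suc (Suc k))) =
     matmul (n (k + 2)) (lam n \<eta> x \<phi> (k + 2)) (vscale (\<phi> (k + 2)) (Kmat \<eta> x (k + 2) (k + 3)))"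
| "lam n \<eta> x \<phi> k = Kmat \<eta> x 1 2"

end

theory Submission
  imports Defs
begin

definition ext :: "(nat \<Rightarrow> nat) \<Rightarrow> nat \<Rightarrow> nat \<Rightarrow> nat \<Rightarrow> nat \<Rightarrow> nat \<Rightarrow> nat" where
  "ext f p q a b t = (if t = p then a else if t = q then b else f t)"

definition Wt :: "(nat \<Rightarrow> mat) \<Rightarrow> (nat \<Rightarrow> vec) \<Rightarrow> nat \<Rightarrow> nat \<Rightarrow> nat \<Rightarrow> nat \<Rightarrow> (nat \<Rightarrow> nat) \<Rightarrow> real" where
  "Wt E w p q a b f = (\<Prod>k\<in>{p..<q}. E k (ext f p q a b k) (ext f p q a b (Suc k))) *
      (\<Prod>k\<in>{Suc p..<q}. w k (f k))"

definition PS :: "(nat \<Rightarrow> mat) \<Rightarrow> (nat \<Rightarrow> vec) \<Rightarrow> (nat \<Rightarrow> nat) \<Rightarrow> nat \<Rightarrow> nat \<Rightarrow> nat \<Rightarrow> nat \<Rightarrow> real" where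
  "PS E w N p q a b = (\<Sum>f\<in>PiE {Suc p..<q} (\<lambda>k. {..<N k}). Wt E w p q a b f)"

lemma PS_one: "PS E w N p (Suc p) a b = E p a b"
  by (simp add: PS_def Wt_def ext_def)

lemma Wt_split:
  assumes "p < m" "m < q"
  shows "Wt E w p q a b (\<lambda>t. if t \<in> {Suc p..<m} then g t else if t = m then c else h t)
       = Wt E w p m a c g * w m c * Wt E w m q c b h"
proof -
  define F where "F = (\<lambda>t. if t \<in> {Suc p..<m} then g t else if t = m then c else h t)"
  have e1: "(\<Prod>k\<in>{p..<q}. E k (ext F p q a b k) (ext F p q a b (Suc k)))
     = (\<Prod>k\<in>{p..<m}. E k (ext F p q a b k) (ext F p q a b (Suc k))) *
       (\<Prod>k\<in>{m..<q}. E k (ext F p q a b k) (ext F p q a b (Suc k)))"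
    using assms by (simp add: prod.atLeastLessThan_concat)
  have e2: "(\<Prod>k\<in>{p..<m}. E k (ext F p q a b k) (ext F p q a b (Suc k)))
     = (\<Prod>k\<in>{p..<m}. E k (ext g p m a c k) (ext g p m a c (Suc k)))"
    using assms by (intro prod.cong) (auto simp: ext_def F_def)
  have e3: "(\<Prod>k\<in>{m..<q}. E k (ext F p q a b k) (ext F p q a b (Suc k)))
     = (\<Prod>k\<in>{m..<q}. E k (ext h m q c b k) (ext h m q c b (Suc k)))"
    using assms by (intro prod.cong) (auto simp: ext_def F_def)
  have w1: "(\<Prod>k\<in>{Suc p..<q}. w k (F k)) = (\<Prod>k\<in>{Suc p..<m}. w k (F k)) * (\<Prod>k\<in>{m..<q}. w k (F k))"
    using assms by (simp add: prod.atLeastLessThan_concat)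
  have w2: "(\<Prod>k\<in>{m..<q}. w k (F k)) = w m c * (\<Prod>k\<in>{Suc m..<q}. w k (F k))"
    using assms by (simp add: F_def prod.atLeast_Suc_lessThan)
  have w3: "(\<Prod>k\<in>{Suc p..<m}. w k (F k)) = (\<Prod>k\<in>{Suc p..<m}. w k (g k))"
    by (intro prod.cong) (auto simp: F_def)
  have w4: "(\<Prod>k\<in>{Suc m..<q}. w k (F k)) = (\<Prod>k\<in>{Suc m..<q}. w k (h k))"
    by (intro prod.cong) (auto simp: F_def)
  show ?thesis
    unfolding F_def[symmetric] Wt_def e1 e2 e3 w1 w2 w3 w4 by (simp add: algebra_simps)
qed

lemma split_sum:
  assumes "p < m" "m < q" "c < N m"
  shows "(\<Sum>f\<in>PiE {Suc p..<q} (\<lambda>k. {..<N k}). if f m = c then Wt E w p q a b f else 0)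
     = PS E w N p m a c * w m c * PS E w N m q c b"
proof -
  let ?S = "{f\<in>PiE {Suc p..<q} (\<lambda>k. {..<N k}). f m = c}"
  let ?T = "PiE {Suc p..<m} (\<lambda>k. {..<N k}) \<times> PiE {Suc m..<q} (\<lambda>k. {..<N k})"
  let ?i = "\<lambda>(g, h). (\<lambda>t. if t \<in> {Suc p..<m} then g t else if t = m then c else h t)"
  let ?j = "\<lambda>f. (restrict f {Suc p..<m}, restrict f {Suc m..<q})"
  have "(\<Sum>f\<in>PiE {Suc p..<q} (\<lambda>k. {..<N k}). if f m = c then Wt E w p q a b f else 0)
      = (\<Sum>f\<in>?S. Wt E w p q a b f)"
    by (rule sum.inter_filter[symmetric]) (simp add: finite_PiE)
  also have "\<dots> = (\<Sum>gh\<in>?T. Wt E w p q a b (?i gh))"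
  proof (rule sum.reindex_bij_witness[of _ ?i ?j])
    fix f assume f: "f \<in> ?S"
    have ij: "?i (?j f) = f"
    proof
      fix t show "?i (?j f) t = f t"
        using f assms by (auto simp: PiE_iff extensional_def)
    qed
    show "?i (?j f) = f" by (rule ij)
    show "Wt E w p q a b (?i (?j f)) = Wt E w p q a b f" by (simp only: ij)
    show "?j f \<in> ?T" using f assms by (auto simp: PiE_iff)
  next
    fix gh assume gh: "gh \<in> ?T"
    obtain g h where [simp]: "gh = (g, h)" by (cases gh)
    show "?j (?i gh) = gh"
      using gh assms by (auto simp: PiE_iff extensional_def fun_eq_iff)
    show "?i gh \<in> ?S"
      using gh assms by (auto simp: PiE_iff extensional_def)
  qed
  also have "\<dots> = (\<Sum>gh\<in>?T. Wt E w p m a c (fst gh) * w m c * Wt E w m q c b (snd gh))"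
  proof (rule sum.cong)
    fix gh assume "gh \<in> ?T"
    show "Wt E w p q a b (?i gh) = Wt E w p m a c (fst gh) * w m c * Wt E w m q c b (snd gh)"
      using Wt_split[OF assms(1,2), of E w a b "fst gh" c "snd gh"] by (simp add: case_prod_beta)
  qed simp
  also have "\<dots> = PS E w N p m a c * w m c * PS E w N m q c b"
  proof -
    have "(\<Sum>gh\<in>?T. Wt E w p m a c (fst gh) * w m c * Wt E w m q c b (snd gh))
       = (\<Sum>g\<in>PiE {Suc p..<m} (\<lambda>k. {..<N k}). \<Sum>h\<in>PiE {Suc m..<q} (\<lambda>k. {..<N k}).
            Wt E w p m a c g * w m c * Wt E w m q c b h)"
      by (simp add: sum.cartesian_product case_prod_beta)
    also have "\<dots> = PS E w N p m a c * w m c * PS E w N m q c b"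
      unfolding PS_def sum_distrib_right sum_distrib_left by (rule sum.swap)
    finally show ?thesis .
  qed
  finally show ?thesis .
qed

lemma PS_peel:
  assumes "p < m" "m < q"
  shows "PS E w N p q a b = (\<Sum>c<N m. PS E w N p m a c * w m c * PS E w N m q c b)"
proof -
  have "(\<Sum>c<N m. PS E w N p m a c * w m c * PS E w N m q c b)
     = (\<Sum>c<N m. \<Sum>f\<in>PiE {Suc p..<q} (\<lambda>k. {..<N k}). if f m = c then Wt E w p q a b f else 0)"
    using assms by (intro sum.cong) (auto simp: split_sum)
  also have "\<dots> = (\<Sum>f\<in>PiE {Suc p..<q} (\<lambda>k. {..<N k}). \<Sum>c<N m. if f m = c then Wt E w p q a b f else 0)"
    by (rule sum.swap)
  also have "\<dots> = PS E w N p q a b"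
    unfolding PS_def using assms by (intro sum.cong) (auto simp: PiE_iff)
  finally show ?thesis by simp
qed

lemma alpha_PS:
  assumes "1 \<le> l" "l + m = K"
  shows "alpha_rec K n \<eta> x \<phi> m l 1 = (\<lambda>a b. PS (\<lambda>k. Kmat \<eta> x k (csucc K k)) \<phi> n l (Suc K) a b)"
  using assms
proof (induction m arbitrary: l)
  case 0
  then show ?case using PS_one[of "\<lambda>k. Kmat \<eta> x k (csucc K k)" \<phi> n K]
    by (simp add: csucc_def)
next
  case (Suc m)
  have cs: "csucc K l = Suc l" using Suc.prems by (simp add: csucc_def)
  have IH: "alpha_rec K n \<eta> x \<phi> m (Suc l) 1 = (\<lambda>a b. PS (\<lambda>k. Kmat \<eta> x k (csucc K k)) \<phi> n (Suc l) (Suc K) a b)"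
    using Suc by simp
  show ?case
  proof (intro ext)
    fix a b
    show "alpha_rec K n \<eta> x \<phi> (Suc m) l 1 a b = PS (\<lambda>k. Kmat \<eta> x k (csucc K k)) \<phi> n l (Suc K) a b"
      using PS_peel[of l "Suc l" "Suc K" "\<lambda>k. Kmat \<eta> x k (csucc K k)" \<phi> n a b] Suc.prems
      by (simp add: cs IH[simplified] matmul_def vscale_def PS_one mult.assoc)
  qed
qed

lemma lam_PS:
  assumes "k + 2 \<le> K"
  shows "lam n \<eta> x \<phi> (k + 2) = (\<lambda>a b. PS (\<lambda>k. Kmat \<eta> x k (csucc K k)) \<phi> n 1 (k + 2) a b)"
  using assms
proof (induction k)
  case 0
  have "lam n \<eta> x \<phi> 2 = Kmat \<eta> x 1 2" by (simp add: numeral_2_eq_2)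
  moreover have "csucc K 1 = 2" using 0 by (simp add: csucc_def)
  ultimately show ?case using PS_one[of "\<lambda>k. Kmat \<eta> x k (csucc K k)" \<phi> n 1]
    by (simp add: numeral_2_eq_2)
next
  case (Suc k)
  have cs: "csucc K (k + 2) = k + 3" using Suc.prems by (simp add: csucc_def)
  have IH: "lam n \<eta> x \<phi> (k + 2) = (\<lambda>a b. PS (\<lambda>k. Kmat \<eta> x k (csucc K k)) \<phi> n 1 (k + 2) a b)"
    using Suc by simp
  have L: "lam n \<eta> x \<phi> (Suc k + 2) = matmul (n (k + 2)) (lam n \<eta> x \<phi> (k + 2))
           (vscale (\<phi> (k + 2)) (Kmat \<eta> x (k + 2) (k + 3)))"
    by (simp add: numeral_2_eq_2 numeral_3_eq_3)
  show ?case
  proof (intro ext)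
    fix a b
    have P: "PS (\<lambda>k. Kmat \<eta> x k (csucc K k)) \<phi> n 1 (Suc k + 2) a b =
       (\<Sum>c<n (k+2). PS (\<lambda>k. Kmat \<eta> x k (csucc K k)) \<phi> n 1 (k+2) a c * \<phi> (k+2) c *
          PS (\<lambda>k. Kmat \<eta> x k (csucc K k)) \<phi> n (k+2) (Suc k + 2) c b)"
      by (rule PS_peel) auto
    have P1: "PS (\<lambda>k. Kmat \<eta> x k (csucc K k)) \<phi> n (k+2) (Suc k + 2) c b = Kmat \<eta> x (k + 2) (k + 3) c b" for c
      using PS_one[of "\<lambda>k. Kmat \<eta> x k (csucc K k)" \<phi> n "k+2" c b] cs by simp
    show "lam n \<eta> x \<phi> (Suc k + 2) a b = PS (\<lambda>k. Kmat \<eta> x k (csucc K k)) \<phi> n 1 (Suc k + 2) a b"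
      unfolding L P P1 IH by (simp add: matmul_def vscale_def mult.assoc)
  qed
qed

lemma exp_scaled_sum:
  "exp (c * sum g {a..b::nat}) = (\<Prod>k=a..b. exp (c * g k))"
  by (simp add: sum_distrib_left exp_sum)

lemma tensor_eq:
  assumes K: "K \<ge> 3" and f: "f \<in> PiE {Suc 1..<Suc K} (\<lambda>k. {..<n k})"
  shows "Ktens K \<eta> x (f(1:=r)) * Phi K \<phi> (f(1:=r)) =
         \<phi> 1 r * Wt (\<lambda>k. Kmat \<eta> x k (csucc K k)) \<phi> 1 (Suc K) r r f"
proof -
  let ?i = "f(1:=r)"
  let ?g = "ext f 1 (Suc K) r r"
  have "Ktens K \<eta> x ?i = (\<Prod>k=1..K. Kmat \<eta> x k (csucc K k) (?i k) (?i (csucc K k)))"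
    unfolding Ktens_def Kmat_def by (rule exp_scaled_sum)
  also have "\<dots> = (\<Prod>k\<in>{1..<Suc K}. Kmat \<eta> x k (csucc K k) (?g k) (?g (Suc k)))"
    using K by (intro prod.cong) (auto simp: ext_def csucc_def)
  finally have A: "Ktens K \<eta> x ?i = (\<Prod>k\<in>{1..<Suc K}. Kmat \<eta> x k (csucc K k) (?g k) (?g (Suc k)))" .
  have S: "{1..K} = insert 1 {Suc 1..<Suc K}" using K by auto
  have "Phi K \<phi> ?i = \<phi> 1 r * (\<Prod>k\<in>{Suc 1..<Suc K}. \<phi> k (?i k))"
    unfolding Phi_def S by (subst prod.insert) auto
  also have "(\<Prod>k\<in>{Suc 1..<Suc K}. \<phi> k (?i k)) = (\<Prod>k\<in>{Suc 1..<Suc K}. \<phi> k (f k))"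
    by (intro prod.cong) auto
  finally have B: "Phi K \<phi> ?i = \<phi> 1 r * (\<Prod>k\<in>{Suc 1..<Suc K}. \<phi> k (f k))" .
  show ?thesis unfolding A B Wt_def by (simp add: algebra_simps)
qed

lemma marg_red:
  assumes K: "K \<ge> 3"
  shows "marg K n k (\<lambda>i. Ktens K \<eta> x i * Phi K \<phi> i) j =
    (\<Sum>r<n 1. \<Sum>f\<in>PiE {Suc 1..<Suc K} (\<lambda>k. {..<n k}).
       if (f(1:=r)) k = j then \<phi> 1 r * Wt (\<lambda>k. Kmat \<eta> x k (csucc K k)) \<phi> 1 (Suc K) r r f else 0)"
proof -
  let ?F = "\<lambda>i. if i k = j then Ktens K \<eta> x i * Phi K \<phi> i else 0"
  let ?P = "PiE {Suc 1..<Suc K} (\<lambda>k. {..<n k})"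
  have S: "{1..K} = insert 1 {Suc 1..<Suc K}" using K by auto
  have "marg K n k (\<lambda>i. Ktens K \<eta> x i * Phi K \<phi> i) j = (\<Sum>i\<in>tidx K n. ?F i)"
    unfolding marg_def by (rule sum.inter_filter) (simp add: tidx_def finite_PiE)
  also have "\<dots> = (\<Sum>rf\<in>{..<n 1} \<times> ?P. ?F ((snd rf)(1 := fst rf)))"
  proof (rule sum.reindex_bij_witness[of _ "\<lambda>rf. (snd rf)(1 := fst rf)" "\<lambda>i. (i 1, restrict i {Suc 1..<Suc K})"])
    fix i assume i: "i \<in> tidx K n"
    have ii: "(restrict i {Suc 1..<Suc K})(1 := i 1) = i"
    proof
      fix t show "((restrict i {Suc 1..<Suc K})(1 := i 1)) t = i t"
        using i K by (auto simp: tidx_def PiE_iff extensional_def)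
    qed
    show "(snd (i 1, restrict i {Suc 1..<Suc K}))(1 := fst (i 1, restrict i {Suc 1..<Suc K})) = i"
      using ii by simp
    show "?F ((snd (i 1, restrict i {Suc 1..<Suc K}))(1 := fst (i 1, restrict i {Suc 1..<Suc K}))) = ?F i"
      using ii by simp
    show "(i 1, restrict i {Suc 1..<Suc K}) \<in> {..<n 1} \<times> ?P"
      using i K by (auto simp: tidx_def PiE_iff)
  next
    fix rf assume rf: "rf \<in> {..<n 1} \<times> ?P"
    obtain r f where [simp]: "rf = (r, f)" by (cases rf)
    show "(((snd rf)(1 := fst rf)) 1, restrict ((snd rf)(1 := fst rf)) {Suc 1..<Suc K}) = rf"
      using rf by (auto simp: PiE_iff extensional_def fun_eq_iff)
    show "(snd rf)(1 := fst rf) \<in> tidx K n"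
      using rf K by (auto simp: PiE_iff extensional_def tidx_def)
  qed
  also have "\<dots> = (\<Sum>r<n 1. \<Sum>f\<in>?P. ?F (f(1 := r)))"
    by (simp add: sum.cartesian_product case_prod_beta)
  also have "\<dots> = (\<Sum>r<n 1. \<Sum>f\<in>?P.
       if (f(1:=r)) k = j then \<phi> 1 r * Wt (\<lambda>k. Kmat \<eta> x k (csucc K k)) \<phi> 1 (Suc K) r r f else 0)"
  proof (intro sum.cong refl)
    fix r f assume "f \<in> ?P"
    then have "Ktens K \<eta> x (f(1:=r)) * Phi K \<phi> (f(1:=r)) =
         \<phi> 1 r * Wt (\<lambda>k. Kmat \<eta> x k (csucc K k)) \<phi> 1 (Suc K) r r f" by (rule tensor_eq[OF K])
    then show "?F (f(1 := r)) = (if (f(1:=r)) k = j then \<phi> 1 r * Wt (\<lambda>k. Kmat \<eta> x k (csucc K k)) \<phi> 1 (Suc K) r r f else 0)"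
      by simp
  qed
  finally show ?thesis .
qed

theorem theorem4:
  fixes K :: nat and n :: "nat \<Rightarrow> nat" and \<eta> :: real
    and x :: "nat \<Rightarrow> nat \<Rightarrow> real ^ 'd" and \<phi> :: "nat \<Rightarrow> nat \<Rightarrow> real"
  assumes "K \<ge> 3" and "\<eta> > 0"
  shows "(\<forall>j < n 1.
           marg K n 1 (\<lambda>i. Ktens K \<eta> x i * Phi K \<phi> i) j =
           \<phi> 1 j * rowinner (n 2) (Kmat \<eta> x 1 2)
                      (mtransp (vscale (\<phi> 2) (alpha K n \<eta> x \<phi> 2 1))) j) \<and>
         (\<forall>k \<in> {2..K}. \<forall>j < n k.
           marg K n k (\<lambda>i. Ktens K \<eta> x i * Phi K \<phi> i) j =
           \<phi> k j * rowinner (n 1) (alpha K n \<eta> x \<phi> k 1)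
                      (mtransp (vscale (\<phi> 1) (lam n \<eta> x \<phi> k))) j)"
proof (intro conjI allI ballI impI)
  define E where "E = (\<lambda>k. Kmat \<eta> x k (csucc K k))"
  have K: "K \<ge> 3" by fact
  let ?P = "PiE {Suc 1..<Suc K} (\<lambda>k. {..<n k})"
  {
    fix j assume j: "j < n 1"
    have "marg K n 1 (\<lambda>i. Ktens K \<eta> x i * Phi K \<phi> i) j =
      (\<Sum>r<n 1. if r = j then \<phi> 1 r * PS E \<phi> n 1 (Suc K) r r else 0)"
      unfolding marg_red[OF K] E_def PS_def
      by (intro sum.cong refl) (auto simp: sum_distrib_left)
    also have "\<dots> = \<phi> 1 j * PS E \<phi> n 1 (Suc K) j j"
      using j by (simp add: sum.delta')
    also have "PS E \<phi> n 1 (Suc K) j j = (\<Sum>c<n 2. PS E \<phi> n 1 2 j c * \<phi> 2 c * PS E \<phi> n 2 (Suc K) c j)"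
      using K by (intro PS_peel) auto
    also have "\<dots> = (\<Sum>c<n 2. Kmat \<eta> x 1 2 j c * (\<phi> 2 c * alpha K n \<eta> x \<phi> 2 1 c j))"
    proof (intro sum.cong refl)
      fix c
      have "PS E \<phi> n 1 2 j c = Kmat \<eta> x 1 2 j c"
        using PS_one[of E \<phi> n 1 j c] K by (simp add: E_def csucc_def numeral_2_eq_2)
      moreover have "alpha K n \<eta> x \<phi> 2 1 = (\<lambda>a b. PS E \<phi> n 2 (Suc K) a b)"
        unfolding alpha_def E_def using K by (intro alpha_PS) (auto simp: cdist_def)
      ultimately show "PS E \<phi> n 1 2 j c * \<phi> 2 c * PS E \<phi> n 2 (Suc K) c j =
          Kmat \<eta> x 1 2 j c * (\<phi> 2 c * alpha K n \<eta> x \<phi> 2 1 c j)" by simp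
    qed
    finally show "marg K n 1 (\<lambda>i. Ktens K \<eta> x i * Phi K \<phi> i) j =
           \<phi> 1 j * rowinner (n 2) (Kmat \<eta> x 1 2)
                      (mtransp (vscale (\<phi> 2) (alpha K n \<eta> x \<phi> 2 1))) j"
      by (simp add: rowinner_def mtransp_def vscale_def)
  }
  {
    fix k j assume k: "k \<in> {2..K}" and j: "j < n k"
    have al: "alpha K n \<eta> x \<phi> k 1 = (\<lambda>a b. PS E \<phi> n k (Suc K) a b)"
      unfolding alpha_def E_def using K k by (intro alpha_PS) (auto simp: cdist_def)
    have la: "lam n \<eta> x \<phi> k = (\<lambda>a b. PS E \<phi> n 1 k a b)"
    proof -
      obtain m where m: "k = m + 2" using k by (metis atLeastAtMost_iff le_add_diff_inverse2)
      show ?thesis using lam_PS[of m K n \<eta> x \<phi>] k unfolding m by (simp add: E_def)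
    qed
    have "marg K n k (\<lambda>i. Ktens K \<eta> x i * Phi K \<phi> i) j =
      (\<Sum>r<n 1. \<phi> 1 r * (\<Sum>f\<in>?P. if f k = j then Wt E \<phi> 1 (Suc K) r r f else 0))"
      unfolding marg_red[OF K] E_def using k
      by (intro sum.cong refl) (auto simp: sum_distrib_left intro!: sum.cong)
    also have "\<dots> = (\<Sum>r<n 1. \<phi> 1 r * (PS E \<phi> n 1 k r j * \<phi> k j * PS E \<phi> n k (Suc K) j r))"
    proof (intro sum.cong refl)
      fix r
      have "(\<Sum>f\<in>?P. if f k = j then Wt E \<phi> 1 (Suc K) r r f else 0) = PS E \<phi> n 1 k r j * \<phi> k j * PS E \<phi> n k (Suc K) j r"
        using k j by (intro split_sum) auto
      then show "\<phi> 1 r * (\<Sum>f\<in>?P. if f k = j then Wt E \<phi> 1 (Suc K) r r f else 0) = \<phi> 1 r * (PS E \<phi> n 1 k r j * \<phi> k j * PS E \<phi> n k (Suc K) j r)"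
        by simp
    qed
    finally show "marg K n k (\<lambda>i. Ktens K \<eta> x i * Phi K \<phi> i) j =
           \<phi> k j * rowinner (n 1) (alpha K n \<eta> x \<phi> k 1)
                      (mtransp (vscale (\<phi> 1) (lam n \<eta> x \<phi> k))) j"
      unfolding al la by (simp add: rowinner_def mtransp_def vscale_def sum_distrib_left mult_ac)
  }
qed

end
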